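(* Let $m,n\ge1$, let $g_{12}$ be an arbitrary complex $2m\times 2n$ matrix, and put $g_{21}=-U_{2n}J_{2n}g_{12}^{\tau}J_{2m}U_{2m}$ (equivalently, $g_{21}$ is an arbitrary $2n\times2m$ matrix and $g_{12}$ is determined from this relation). Let $G(\lambda)$, $\theta(\lambda)$, $\widehat u(\lambda)$, $u(\mu)$ be as defined in the context. Then, as rational functions of $\lambda=(\lambda_1,\lambda_2)$ and $\mu=(\mu_1,\mu_2)$, $$\mathrm{i}(\lambda_1-\mu_1)^{-1}u(\mu)P_1\widehat u(\lambda)=\mathrm{i}(\lambda_2-\mu_2)^{-1}u(\mu)P_2\widehat u(\lambda),$$ i.e. the function $\omega(\lambda,\mu):=\mathrm{i}(\lambda_p-\mu_p)^{-1}u(\mu)P_p\widehat u(\lambda)$ is the same for $p=1$ and $p=2$.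
   Context: $\mathrm{i}$ is the imaginary unit, $I_r$ the $r\times r$ identity, $\mathbf 1_r$ the all-ones column of length $r$, $^\tau$ transpose. For $N\ge1$, $\mathcal{A}^{(N)}=\{a_{j-\ell}\}_{j,\ell=1}^N$ with $a_r=0$ ($r<0$), $a_0=\mathrm{i}/2$, $a_r=\mathrm{i}$ ($r>0$); $\mathcal A_1=\mathcal A^{(n)}$, $\mathcal A_2=\mathcal A^{(m)}$. $U_{2N}$ is the $2N\times 2N$ matrix with ones on the antidiagonal and zeros elsewhere; $J_{2N}=\mathrm{diag}\{I_N,-I_N\}$. $P_1=\mathrm{diag}\{I_{2m},0_{2n}\}$, $P_2=I_{2(m+n)}-P_1$. $$G(\lambda)=\begin{bmatrix}\mathrm{diag}\{\mathcal A_2-\lambda_2I_m,\mathcal A_2-\lambda_2I_m\}&g_{12}\\ g_{21}&\mathrm{diag}\{\mathcal A_1-\lambda_1I_n,\mathcal A_1-\lambda_1I_n\}\end{bmatrix}.$$ $\theta(\lambda)$ is the polynomial with $\theta^2=\det G$ and coefficient of $\lambda_1^n\lambda_2^m$ equal to $-1$. Then $\widehat u(\lambda)=-\mathrm{i}(\lambda_1-\frac{\mathrm{i}}2)^{-n}(\lambda_2-\frac{\mathrm{i}}2)^{-m}\theta(\lambda)G(\lambda)^{-1}\mathrm{col}[0,\mathbf 1_m,0,\mathbf 1_n]$ (zero blocks of heights $m$ and $n$) and $u(\mu)=\big(\frac{\mu_1-\mathrm{i}/2}{\mu_1+\mathrm{i}/2}\big)^n\big(\frac{\mu_2-\mathrm{i}/2}{\mu_2+\mathrm{i}/2}\big)^m\widehat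 u(\mu)^{\tau}\mathrm{diag}\{J_{2m}U_{2m},J_{2n}U_{2n}\}$. *)

theory Defs
  imports "Jordan_Normal_Form.Gauss_Jordan_Elimination" "Jordan_Normal_Form.Determinant" "HOL-Computational_Algebra.Polynomial"
begin

(* Toeplitz matrix A^(N) = {a_{j-l}}, a_r = 0 (r<0), a_0 = i/2, a_r = i (r>0); indices 0-based *)
definition A_mat :: "nat \<Rightarrow> complex mat" where
  "A_mat N = mat N N (\<lambda>(j,l). if j < l then 0 else if j = l then \<i>/2 else \<i>)"

definition U_mat :: "nat \<Rightarrow> complex mat" where
  "U_mat K = mat K K (\<lambda>(j,l). if j + l + 1 = K then 1 else 0)"

definition J_mat :: "nat \<Rightarrow> complex mat" where
  "J_mat N = mat (2*N) (2*N) (\<lambda>(j,l). if j = l then (if j < N then 1 else -1) else 0)"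

definition diag2 :: "complex mat \<Rightarrow> complex mat" where
  "diag2 M = four_block_mat M (0\<^sub>m (dim_row M) (dim_col M)) (0\<^sub>m (dim_row M) (dim_col M)) M"

definition g21_of :: "nat \<Rightarrow> nat \<Rightarrow> complex mat \<Rightarrow> complex mat" where
  "g21_of m n g12 = - (U_mat (2*n) * J_mat n * transpose_mat g12 * J_mat m * U_mat (2*m))"

definition G_mat :: "nat \<Rightarrow> nat \<Rightarrow> complex mat \<Rightarrow> complex \<Rightarrow> complex \<Rightarrow> complex mat" where
  "G_mat m n g12 l1 l2 =
     four_block_mat (diag2 (A_mat m - l2 \<cdot>\<^sub>m 1\<^sub>m m)) g12
                    (g21_of m n g12) (diag2 (A_mat n - l1 \<cdot>\<^sub>m 1\<^sub>m n))"

definition minv :: "complex mat \<Rightarrow> complex mat" where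
  "minv M = (case mat_inverse M of Some B \<Rightarrow> B | None \<Rightarrow> 0\<^sub>m (dim_row M) (dim_col M))"

(* col[0_m, 1_m, 0_n, 1_n] *)
definition e_vec :: "nat \<Rightarrow> nat \<Rightarrow> complex vec" where
  "e_vec m n = vec (2*m + 2*n) (\<lambda>k. if (m \<le> k \<and> k < 2*m) \<or> 2*m + n \<le> k then 1 else 0)"

(* bivariate polynomial as nested polynomial: outer variable l1, inner variable l2;
   the coefficient of l1^i l2^j is coeff (coeff p i) j *)
definition poly2 :: "complex poly poly \<Rightarrow> complex \<Rightarrow> complex \<Rightarrow> complex" where
  "poly2 p l1 l2 = poly (map_poly (\<lambda>q. poly q l2) p) l1"

(* hat u(lambda) as a column vector, theta given by the polynomial p *)
definition uhat :: "nat \<Rightarrow> nat \<Rightarrow> complex mat \<Rightarrow> complex poly poly \<Rightarrow> complex \<Rightarrow> complex \<Rightarrow> complex vec" where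
  "uhat m n g12 p l1 l2 =
     (- \<i> * inverse ((l1 - \<i>/2) ^ n) * inverse ((l2 - \<i>/2) ^ m) * poly2 p l1 l2)
       \<cdot>\<^sub>v (minv (G_mat m n g12 l1 l2) *\<^sub>v e_vec m n)"

(* u(mu) as a row vector (represented as a vec): scalar * uhat(mu)^T * diag{J U, J U} *)
definition u_row :: "nat \<Rightarrow> nat \<Rightarrow> complex mat \<Rightarrow> complex poly poly \<Rightarrow> complex \<Rightarrow> complex \<Rightarrow> complex vec" where
  "u_row m n g12 p k1 k2 =
     (((k1 - \<i>/2) / (k1 + \<i>/2)) ^ n * ((k2 - \<i>/2) / (k2 + \<i>/2)) ^ m)
       \<cdot>\<^sub>v (transpose_mat (four_block_mat (J_mat m * U_mat (2*m)) (0\<^sub>m (2*m) (2*n))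
                                          (0\<^sub>m (2*n) (2*m)) (J_mat n * U_mat (2*n)))
            *\<^sub>v uhat m n g12 p k1 k2)"

definition P1_mat :: "nat \<Rightarrow> nat \<Rightarrow> complex mat" where
  "P1_mat m n = mat (2*m + 2*n) (2*m + 2*n) (\<lambda>(j,l). if j = l \<and> j < 2*m then 1 else 0)"

definition P2_mat :: "nat \<Rightarrow> nat \<Rightarrow> complex mat" where
  "P2_mat m n = 1\<^sub>m (2*m + 2*n) - P1_mat m n"

end

theory Submission
  imports Defs
begin


definition antid :: "nat \<Rightarrow> (nat \<Rightarrow> complex) \<Rightarrow> complex mat" where
  "antid K f = mat K K (\<lambda>(i,j). if i + j + 1 = K then f i else 0)"
definition dmat :: "nat \<Rightarrow> (nat \<Rightarrow> complex) \<Rightarrow> complex mat" where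
  "dmat K f = mat K K (\<lambda>(i,j). if i = j then f i else 0)"

lemma sum_single: "(k::nat) < K \<Longrightarrow> (\<forall>x. x < K \<longrightarrow> x \<noteq> k \<longrightarrow> g x = 0) \<Longrightarrow> (\<Sum>x\<in>{0..<K}. g x) = (g k :: complex)"
proof -
  assume a: "k < K" "\<forall>x. x < K \<longrightarrow> x \<noteq> k \<longrightarrow> g x = 0"
  have "sum g {0..<K} = g k + sum g ({0..<K}-{k})" using a by (intro sum.remove) auto
  moreover have "sum g ({0..<K}-{k}) = 0" using a by (intro sum.neutral) auto
  ultimately show ?thesis by simp
qed

lemma anti_mult: assumes "M \<in> carrier_mat K c"
  shows "antid K f * M = mat K c (\<lambda>(i,j). f i * M $$ (K-1-i, j))"
proof (rule eq_matI)
  fix i j assume ij: "i < dim_row (mat K c (\<lambda>(i,j). f i * M $$ (K-1-i, j)))" "j < dim_col (mat K c (\<lambda>(i,j). f i * M $$ (K-1-i, j)))"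
  have "(antid K f * M) $$ (i,j) = (\<Sum>x\<in>{0..<K}. (if i + x + 1 = K then f i else 0) * M $$ (x, j))"
    using ij assms by (simp add: antid_def scalar_prod_def)
  also have "\<dots> = (if i + (K-1-i) + 1 = K then f i else 0) * M $$ (K-1-i, j)"
    using ij by (intro sum_single) auto
  finally show "(antid K f * M) $$ (i,j) = mat K c (\<lambda>(i,j). f i * M $$ (K-1-i, j)) $$ (i,j)"
    using ij by auto
qed (use assms in \<open>auto simp: antid_def\<close>)

lemma mult_anti: assumes "M \<in> carrier_mat r K"
  shows "M * antid K f = mat r K (\<lambda>(i,j). M $$ (i, K-1-j) * f (K-1-j))"
proof (rule eq_matI)
  fix i j assume ij: "i < dim_row (mat r K (\<lambda>(i,j). M $$ (i, K-1-j) * f (K-1-j)))" "j < dim_col (mat r K (\<lambda>(i,j). M $$ (i, K-1-j) * f (K-1-j)))"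
  have "(M * antid K f) $$ (i,j) = (\<Sum>x\<in>{0..<K}. M $$ (i, x) * (if x + j + 1 = K then f x else 0))"
    using ij assms by (simp add: antid_def scalar_prod_def)
  also have "\<dots> = M $$ (i, K-1-j) * (if (K-1-j) + j + 1 = K then f (K-1-j) else 0)"
    using ij by (intro sum_single) auto
  finally show "(M * antid K f) $$ (i,j) = mat r K (\<lambda>(i,j). M $$ (i, K-1-j) * f (K-1-j)) $$ (i,j)"
    using ij by auto
qed (use assms in \<open>auto simp: antid_def\<close>)

lemma dmat_mult: assumes "M \<in> carrier_mat K c"
  shows "dmat K f * M = mat K c (\<lambda>(i,j). f i * M $$ (i, j))"
proof (rule eq_matI)
  fix i j assume ij: "i < dim_row (mat K c (\<lambda>(i,j). f i * M $$ (i, j)))" "j < dim_col (mat K c (\<lambda>(i,j). f i * M $$ (i, j)))"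
  have "(dmat K f * M) $$ (i,j) = (\<Sum>x\<in>{0..<K}. (if i = x then f i else 0) * M $$ (x, j))"
    using ij assms by (simp add: dmat_def scalar_prod_def)
  also have "\<dots> = (if i = i then f i else 0) * M $$ (i, j)"
    using ij by (intro sum_single) auto
  finally show "(dmat K f * M) $$ (i,j) = mat K c (\<lambda>(i,j). f i * M $$ (i, j)) $$ (i,j)"
    using ij by auto
qed (use assms in \<open>auto simp: dmat_def\<close>)

lemma mult_dmat: assumes "M \<in> carrier_mat r K"
  shows "M * dmat K f = mat r K (\<lambda>(i,j). M $$ (i, j) * f j)"
proof (rule eq_matI)
  fix i j assume ij: "i < dim_row (mat r K (\<lambda>(i,j). M $$ (i, j) * f j))" "j < dim_col (mat r K (\<lambda>(i,j). M $$ (i, j) * f j))"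
  have "(M * dmat K f) $$ (i,j) = (\<Sum>x\<in>{0..<K}. M $$ (i, x) * (if x = j then f x else 0))"
    using ij assms by (simp add: dmat_def scalar_prod_def)
  also have "\<dots> = M $$ (i, j) * (if j = j then f j else 0)"
    using ij by (intro sum_single) auto
  finally show "(M * dmat K f) $$ (i,j) = mat r K (\<lambda>(i,j). M $$ (i, j) * f j) $$ (i,j)"
    using ij by auto
qed (use assms in \<open>auto simp: dmat_def\<close>)


definition sg :: "nat \<Rightarrow> nat \<Rightarrow> complex" where "sg N i = (if i < N then 1 else -1)"

lemma sg_flip: "i < 2*N \<Longrightarrow> sg N (2*N-1-i) = - sg N i"
  by (auto simp: sg_def)
lemma sg_sq: "sg N i * sg N i = 1" by (auto simp: sg_def)

lemma antid_carrier[simp]: "antid K f \<in> carrier_mat K K" by (simp add: antid_def)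
lemma dmat_carrier[simp]: "dmat K f \<in> carrier_mat K K" by (simp add: dmat_def)

lemma U_antid: "U_mat K = antid K (\<lambda>_. 1)"
  unfolding U_mat_def antid_def by simp
lemma J_dmat: "J_mat N = dmat (2*N) (sg N)"
  unfolding J_mat_def dmat_def sg_def by (intro eq_matI) auto

lemma JU: "J_mat N * U_mat (2*N) = antid (2*N) (sg N)"
  unfolding J_dmat by (subst dmat_mult[of _ _ "2*N"]) (auto simp: antid_def U_mat_def intro!: eq_matI)

lemma UJ: "U_mat (2*N) * J_mat N = antid (2*N) (\<lambda>i. sg N (2*N-1-i))"
  unfolding U_antid by (subst anti_mult[of _ "2*N" "2*N"]) (auto simp: antid_def J_mat_def sg_def intro!: eq_matI)

definition dg :: "nat \<Rightarrow> complex \<Rightarrow> nat \<Rightarrow> nat \<Rightarrow> complex" where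
  "dg N c a b = (if (a < N) = (b < N) then (if a < b then 0 else if a = b then \<i>/2 - c else \<i>) else 0)"

lemma Ac_carrier[simp]: "A_mat N - c \<cdot>\<^sub>m 1\<^sub>m N \<in> carrier_mat N N"
  by (intro minus_carrier_mat smult_carrier_mat one_carrier_mat)

lemma diag2_carrier[simp]: "diag2 (A_mat N - c \<cdot>\<^sub>m 1\<^sub>m N) \<in> carrier_mat (2*N) (2*N)"
proof -
  have "diag2 (A_mat N - c \<cdot>\<^sub>m 1\<^sub>m N) \<in> carrier_mat (N+N) (N+N)"
    unfolding diag2_def by (rule four_block_carrier_mat) auto
  thus ?thesis by (simp add: mult_2)
qed

lemma diag2_entry: "a < 2*N \<Longrightarrow> b < 2*N \<Longrightarrow> diag2 (A_mat N - c \<cdot>\<^sub>m 1\<^sub>m N) $$ (a,b) = dg N c a b"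
proof -
  assume ab: "a < 2*N" "b < 2*N"
  show ?thesis unfolding diag2_def
    using ab by (cases "a<N"; cases "b<N") (simp_all add: A_mat_def dg_def eq_diff_iff less_diff_iff)
qed

lemma g21_carrier[simp]: "g12 \<in> carrier_mat (2*m) (2*n) \<Longrightarrow> g21_of m n g12 \<in> carrier_mat (2*n) (2*m)"
  unfolding g21_of_def J_mat_def U_mat_def by auto

lemma flip_flip[simp]: "(i::nat) < K \<Longrightarrow> K - Suc (K - Suc i) = i" by simp

lemma g21_entry: assumes g: "g12 \<in> carrier_mat (2*m) (2*n)" and ab: "a < 2*n" "b < 2*m"
  shows "g21_of m n g12 $$ (a,b) = - sg n (2*n-1-a) * sg m (2*m-1-b) * g12 $$ (2*m-1-b, 2*n-1-a)"
proof -
  have "g21_of m n g12 = - (((antid (2*n) (\<lambda>i. sg n (2*n-1-i)) * transpose_mat g12) * dmat (2*m) (sg m)) * antid (2*m) (\<lambda>_. 1))"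
    unfolding g21_of_def UJ J_dmat[of m] U_antid[of "2*m"] ..
  also have "\<dots> = - mat (2*n) (2*m) (\<lambda>(i,j). sg n (2*n-1-i) * transpose_mat g12 $$ (2*n-1-i, 2*m-1-j) * sg m (2*m-1-j))"
    using g by (simp add: anti_mult[of _ "2*n" "2*m"] mult_dmat[of _ "2*n" "2*m"] mult_anti[of _ "2*n" "2*m"], intro eq_matI) auto
  finally show ?thesis using g ab by simp
qed


lemma sg_flip'[simp]: "i < 2*N \<Longrightarrow> sg N (2*N - Suc i) = - sg N i"
  by (auto simp: sg_def)

lemma E1: assumes "i < 2*N" "j < 2*N"
  shows "dg N c (2*N - Suc j) i * sg N (2*N - Suc j) = sg N i * dg N d (2*N - Suc i) j + (d-c) * (if i+j+1 = 2*N then sg N i else 0)"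
  using assms by (cases "i+j+1 = 2*N") (auto simp: dg_def sg_def algebra_simps)

lemma E12: assumes "i < 2*m" "j < 2*n"
  shows "(- sg n (2*n - Suc (2*n - Suc j)) * sg m (2*m - Suc i) * x) * (- sg n (2*n - Suc j)) = sg m i * x"
  using assms by (auto simp: sg_def)

lemma E21: assumes "i < 2*n" "j < 2*m"
  shows "x * sg m (2*m - Suc j) = - sg n i * (- sg n (2*n - Suc (2*n - Suc i)) * sg m (2*m - Suc j) * x)"
  using assms by (auto simp: sg_def)



definition Qm :: "nat \<Rightarrow> nat \<Rightarrow> complex mat" where
  "Qm m n = four_block_mat (antid (2*m) (sg m)) (0\<^sub>m (2*m) (2*n)) (0\<^sub>m (2*n) (2*m)) (antid (2*n) (\<lambda>i. - sg n i))"

definition Dm :: "nat \<Rightarrow> nat \<Rightarrow> complex mat" where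
  "Dm m n = four_block_mat (J_mat m * U_mat (2*m)) (0\<^sub>m (2*m) (2*n)) (0\<^sub>m (2*n) (2*m)) (J_mat n * U_mat (2*n))"

lemma P1_dmat: "P1_mat m n = dmat (2*m+2*n) (\<lambda>j. if j < 2*m then 1 else 0)"
  unfolding P1_mat_def dmat_def by (intro eq_matI) auto
lemma P2_dmat: "P2_mat m n = dmat (2*m+2*n) (\<lambda>j. if j < 2*m then 0 else 1)"
  unfolding P2_mat_def P1_mat_def dmat_def by (intro eq_matI) auto

lemma Qm_carrier[simp]: "Qm m n \<in> carrier_mat (2*m+2*n) (2*m+2*n)"
  unfolding Qm_def by (rule four_block_carrier_mat) auto
lemma Dm_carrier[simp]: "Dm m n \<in> carrier_mat (2*m+2*n) (2*m+2*n)"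
  unfolding Dm_def JU by (rule four_block_carrier_mat) auto

lemma G_carrier[simp]: "g12 \<in> carrier_mat (2*m) (2*n) \<Longrightarrow> G_mat m n g12 x y \<in> carrier_mat (2*m+2*n) (2*m+2*n)"
  unfolding G_mat_def by (rule four_block_carrier_mat) auto

lemma diag2_dim[simp]: "dim_row (diag2 (A_mat N - c \<cdot>\<^sub>m 1\<^sub>m N)) = 2*N" "dim_col (diag2 (A_mat N - c \<cdot>\<^sub>m 1\<^sub>m N)) = 2*N"
  using carrier_matD[OF diag2_carrier[of N c]] by simp_all

lemma GT_Q: assumes g: "g12 \<in> carrier_mat (2*m) (2*n)"
  shows "transpose_mat (G_mat m n g12 k1 k2) * Qm m n =
    mat (2*m+2*n) (2*m+2*n) (\<lambda>(i,j). if i < 2*m then if j < 2*m then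
         dg m k2 (2*m - Suc j) i * sg m (2*m - Suc j)
       else g21_of m n g12 $$ (2*n - Suc (j - 2*m), i) * (- sg n (2*n - Suc (j - 2*m)))
     else if j < 2*m then g12 $$ (2*m - Suc j, i - 2*m) * sg m (2*m - Suc j)
       else dg n k1 (2*n - Suc (j - 2*m)) (i - 2*m) * (- sg n (2*n - Suc (j - 2*m))))"
proof -
  let ?D2 = "diag2 (A_mat m - k2 \<cdot>\<^sub>m 1\<^sub>m m)" and ?D1 = "diag2 (A_mat n - k1 \<cdot>\<^sub>m 1\<^sub>m n)"
  let ?g21 = "g21_of m n g12"
  have d21[simp]: "dim_row ?g21 = 2*n" "dim_col ?g21 = 2*m" using g21_carrier[OF g] by auto
  have "transpose_mat (G_mat m n g12 k1 k2) = four_block_mat (transpose_mat ?D2) (transpose_mat ?g21) (transpose_mat g12) (transpose_mat ?D1)"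
    unfolding G_mat_def using g by (intro transpose_four_block_mat) auto
  also have "\<dots> * Qm m n = four_block_mat (transpose_mat ?D2 * antid (2*m) (sg m) + transpose_mat ?g21 * 0\<^sub>m (2*n) (2*m))
       (transpose_mat ?D2 * 0\<^sub>m (2*m) (2*n) + transpose_mat ?g21 * antid (2*n) (\<lambda>i. - sg n i))
       (transpose_mat g12 * antid (2*m) (sg m) + transpose_mat ?D1 * 0\<^sub>m (2*n) (2*m))
       (transpose_mat g12 * 0\<^sub>m (2*m) (2*n) + transpose_mat ?D1 * antid (2*n) (\<lambda>i. - sg n i))"
    unfolding Qm_def
    by (rule mult_four_block_mat[of _ "2*m" "2*m" _ "2*n" _ "2*n" _ _ "2*m" _ "2*n"]) (use g in auto)
  also have "\<dots> = four_block_mat (transpose_mat ?D2 * antid (2*m) (sg m))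
       (transpose_mat ?g21 * antid (2*n) (\<lambda>i. - sg n i))
       (transpose_mat g12 * antid (2*m) (sg m))
       (transpose_mat ?D1 * antid (2*n) (\<lambda>i. - sg n i))"
  proof (intro cong_four_block_mat)
    have "transpose_mat ?D2 * antid (2*m) (sg m) \<in> carrier_mat (2*m) (2*m)" by (rule mult_carrier_mat[of _ _ "2*m"]) auto
    then show "transpose_mat ?D2 * antid (2*m) (sg m) + transpose_mat ?g21 * 0\<^sub>m (2*n) (2*m) = transpose_mat ?D2 * antid (2*m) (sg m)"
      by simp
    have "transpose_mat ?g21 * antid (2*n) (\<lambda>i. - sg n i) \<in> carrier_mat (2*m) (2*n)" by (rule mult_carrier_mat[of _ _ "2*n"]) auto
    then show "transpose_mat ?D2 * 0\<^sub>m (2*m) (2*n) + transpose_mat ?g21 * antid (2*n) (\<lambda>i. - sg n i) = transpose_mat ?g21 * antid (2*n) (\<lambda>i. - sg n i)"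
      by simp
    have "transpose_mat g12 * antid (2*m) (sg m) \<in> carrier_mat (2*n) (2*m)" using g by (intro mult_carrier_mat[of _ _ "2*m"]) auto
    then show "transpose_mat g12 * antid (2*m) (sg m) + transpose_mat ?D1 * 0\<^sub>m (2*n) (2*m) = transpose_mat g12 * antid (2*m) (sg m)"
      by simp
    have "transpose_mat ?D1 * antid (2*n) (\<lambda>i. - sg n i) \<in> carrier_mat (2*n) (2*n)" by (rule mult_carrier_mat[of _ _ "2*n"]) auto
    then show "transpose_mat g12 * 0\<^sub>m (2*m) (2*n) + transpose_mat ?D1 * antid (2*n) (\<lambda>i. - sg n i) = transpose_mat ?D1 * antid (2*n) (\<lambda>i. - sg n i)"
      using g by simp
  qed
  also have "\<dots> = mat (2*m+2*n) (2*m+2*n) (\<lambda>(i,j). if i < 2*m then if j < 2*m then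
         dg m k2 (2*m - Suc j) i * sg m (2*m - Suc j)
       else g21_of m n g12 $$ (2*n - Suc (j - 2*m), i) * (- sg n (2*n - Suc (j - 2*m)))
     else if j < 2*m then g12 $$ (2*m - Suc j, i - 2*m) * sg m (2*m - Suc j)
       else dg n k1 (2*n - Suc (j - 2*m)) (i - 2*m) * (- sg n (2*n - Suc (j - 2*m))))"
  proof -
    have e1: "transpose_mat ?D2 * antid (2*m) (sg m) = mat (2*m) (2*m) (\<lambda>(i,j). transpose_mat ?D2 $$ (i, 2*m-1-j) * sg m (2*m-1-j))"
      by (rule mult_anti) simp
    have e2: "transpose_mat ?g21 * antid (2*n) (\<lambda>i. - sg n i) = mat (2*m) (2*n) (\<lambda>(i,j). transpose_mat ?g21 $$ (i, 2*n-1-j) * (- sg n (2*n-1-j)))"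
      by (rule mult_anti) (use g in simp)
    have e3: "transpose_mat g12 * antid (2*m) (sg m) = mat (2*n) (2*m) (\<lambda>(i,j). transpose_mat g12 $$ (i, 2*m-1-j) * sg m (2*m-1-j))"
      by (rule mult_anti) (use g in simp)
    have e4: "transpose_mat ?D1 * antid (2*n) (\<lambda>i. - sg n i) = mat (2*n) (2*n) (\<lambda>(i,j). transpose_mat ?D1 $$ (i, 2*n-1-j) * (- sg n (2*n-1-j)))"
      by (rule mult_anti) simp
    show ?thesis unfolding e1 e2 e3 e4
      by (rule eq_matI) (use g in \<open>auto simp: diag2_entry\<close>)
  qed
  finally show ?thesis .
qed


lemma Q_G: assumes g: "g12 \<in> carrier_mat (2*m) (2*n)"
  shows "Qm m n * G_mat m n g12 l1 l2 =
    mat (2*m+2*n) (2*m+2*n) (\<lambda>(i,j). if i < 2*m then if j < 2*m then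
         sg m i * dg m l2 (2*m - Suc i) j
       else sg m i * g12 $$ (2*m - Suc i, j - 2*m)
     else if j < 2*m then - sg n (i - 2*m) * g21_of m n g12 $$ (2*n - Suc (i - 2*m), j)
       else - sg n (i - 2*m) * dg n l1 (2*n - Suc (i - 2*m)) (j - 2*m))"
proof -
  let ?D2 = "diag2 (A_mat m - l2 \<cdot>\<^sub>m 1\<^sub>m m)" and ?D1 = "diag2 (A_mat n - l1 \<cdot>\<^sub>m 1\<^sub>m n)"
  let ?g21 = "g21_of m n g12"
  have d21[simp]: "dim_row ?g21 = 2*n" "dim_col ?g21 = 2*m" using g21_carrier[OF g] by auto
  have "Qm m n * G_mat m n g12 l1 l2 = four_block_mat (antid (2*m) (sg m) * ?D2 + 0\<^sub>m (2*m) (2*n) * ?g21)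
       (antid (2*m) (sg m) * g12 + 0\<^sub>m (2*m) (2*n) * ?D1)
       (0\<^sub>m (2*n) (2*m) * ?D2 + antid (2*n) (\<lambda>i. - sg n i) * ?g21)
       (0\<^sub>m (2*n) (2*m) * g12 + antid (2*n) (\<lambda>i. - sg n i) * ?D1)"
    unfolding Qm_def G_mat_def
    by (rule mult_four_block_mat[of _ "2*m" "2*m" _ "2*n" _ "2*n" _ _ "2*m" _ "2*n"]) (use g in auto)
  also have "\<dots> = four_block_mat (antid (2*m) (sg m) * ?D2)
       (antid (2*m) (sg m) * g12)
       (antid (2*n) (\<lambda>i. - sg n i) * ?g21)
       (antid (2*n) (\<lambda>i. - sg n i) * ?D1)"
  proof (intro cong_four_block_mat)
    have "antid (2*m) (sg m) * ?D2 \<in> carrier_mat (2*m) (2*m)" by (rule mult_carrier_mat[of _ _ "2*m"]) auto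
    then show "antid (2*m) (sg m) * ?D2 + 0\<^sub>m (2*m) (2*n) * ?g21 = antid (2*m) (sg m) * ?D2" by simp
    have "antid (2*m) (sg m) * g12 \<in> carrier_mat (2*m) (2*n)" using g by (intro mult_carrier_mat[of _ _ "2*m"]) auto
    then show "antid (2*m) (sg m) * g12 + 0\<^sub>m (2*m) (2*n) * ?D1 = antid (2*m) (sg m) * g12" by simp
    have "antid (2*n) (\<lambda>i. - sg n i) * ?g21 \<in> carrier_mat (2*n) (2*m)" using g by (intro mult_carrier_mat[of _ _ "2*n"]) auto
    then show "0\<^sub>m (2*n) (2*m) * ?D2 + antid (2*n) (\<lambda>i. - sg n i) * ?g21 = antid (2*n) (\<lambda>i. - sg n i) * ?g21" by simp
    have "antid (2*n) (\<lambda>i. - sg n i) * ?D1 \<in> carrier_mat (2*n) (2*n)" by (intro mult_carrier_mat[of _ _ "2*n"]) auto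
    then show "0\<^sub>m (2*n) (2*m) * g12 + antid (2*n) (\<lambda>i. - sg n i) * ?D1 = antid (2*n) (\<lambda>i. - sg n i) * ?D1"
      using g by simp
  qed
  also have "\<dots> = mat (2*m+2*n) (2*m+2*n) (\<lambda>(i,j). if i < 2*m then if j < 2*m then
         sg m i * dg m l2 (2*m - Suc i) j
       else sg m i * g12 $$ (2*m - Suc i, j - 2*m)
     else if j < 2*m then - sg n (i - 2*m) * g21_of m n g12 $$ (2*n - Suc (i - 2*m), j)
       else - sg n (i - 2*m) * dg n l1 (2*n - Suc (i - 2*m)) (j - 2*m))"
  proof -
    have e1: "antid (2*m) (sg m) * ?D2 = mat (2*m) (2*m) (\<lambda>(i,j). sg m i * ?D2 $$ (2*m-1-i, j))"
      by (rule anti_mult) simp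
    have e2: "antid (2*m) (sg m) * g12 = mat (2*m) (2*n) (\<lambda>(i,j). sg m i * g12 $$ (2*m-1-i, j))"
      by (rule anti_mult) (use g in simp)
    have e3: "antid (2*n) (\<lambda>i. - sg n i) * ?g21 = mat (2*n) (2*m) (\<lambda>(i,j). - sg n i * ?g21 $$ (2*n-1-i, j))"
      by (rule anti_mult) (use g in simp)
    have e4: "antid (2*n) (\<lambda>i. - sg n i) * ?D1 = mat (2*n) (2*n) (\<lambda>(i,j). - sg n i * ?D1 $$ (2*n-1-i, j))"
      by (rule anti_mult) simp
    show ?thesis unfolding e1 e2 e3 e4
      by (rule eq_matI) (use g in \<open>auto simp: diag2_entry\<close>)
  qed
  finally show ?thesis .
qed

lemma Dm_entry: assumes "i < 2*m+2*n" "j < 2*m+2*n"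
  shows "Dm m n $$ (i,j) = (if i < 2*m then (if j < 2*m then (if i+j+1 = 2*m then sg m i else 0) else 0)
     else (if j < 2*m then 0 else (if (i-2*m)+(j-2*m)+1 = 2*n then sg n (i-2*m) else 0)))"
  unfolding Dm_def JU using assms by (simp add: antid_def)


lemma F1: assumes g: "g12 \<in> carrier_mat (2*m) (2*n)"
  shows "transpose_mat (G_mat m n g12 k1 k2) * Qm m n = Qm m n * G_mat m n g12 l1 l2
     + ((l2-k2) \<cdot>\<^sub>m (Dm m n * P1_mat m n) - (l1-k1) \<cdot>\<^sub>m (Dm m n * P2_mat m n))"
proof -
  have P1: "Dm m n * P1_mat m n = mat (2*m+2*n) (2*m+2*n) (\<lambda>(i,j). Dm m n $$ (i,j) * (if j < 2*m then 1 else 0))"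
    unfolding P1_dmat by (rule mult_dmat) simp
  have P2: "Dm m n * P2_mat m n = mat (2*m+2*n) (2*m+2*n) (\<lambda>(i,j). Dm m n $$ (i,j) * (if j < 2*m then 0 else 1))"
    unfolding P2_dmat by (rule mult_dmat) simp
  show ?thesis unfolding GT_Q[OF g] Q_G[OF g] P1 P2
  proof (rule eq_matI, goal_cases)
    case (1 i j)
    hence i: "i < 2*m+2*n" and j: "j < 2*m+2*n" by auto
    show ?case
    proof (cases "i < 2*m"; cases "j < 2*m")
      assume a: "i < 2*m" "j < 2*m"
      show ?thesis using i j a E1[OF a, of k2 l2] by (simp add: Dm_entry)
    next
      assume a: "i < 2*m" "\<not> j < 2*m"
      have j': "j - 2*m < 2*n" using j a by auto
      show ?thesis using i j a E12[OF a(1) j', of "g12 $$ (2*m - Suc i, j - 2*m)"] by (simp add: Dm_entry g21_entry[OF g])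
    next
      assume a: "\<not> i < 2*m" "j < 2*m"
      have i': "i - 2*m < 2*n" using i a by auto
      show ?thesis using i j a E21[OF i' a(2), of "g12 $$ (2*m - Suc j, i - 2*m)"] by (simp add: Dm_entry g21_entry[OF g])
    next
      assume a: "\<not> i < 2*m" "\<not> j < 2*m"
      have i': "i - 2*m < 2*n" and j': "j - 2*m < 2*n" using i j a by auto
      show ?thesis using i j a E1[OF i' j', of k1 l1] by (simp add: Dm_entry algebra_simps)
    qed
  qed auto
qed


lemma Qm_entry: assumes "i < 2*m+2*n" "j < 2*m+2*n"
  shows "Qm m n $$ (i,j) = (if i < 2*m then (if j < 2*m then (if i+j+1 = 2*m then sg m i else 0) else 0)
     else (if j < 2*m then 0 else (if (i-2*m)+(j-2*m)+1 = 2*n then - sg n (i-2*m) else 0)))"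
  unfolding Qm_def using assms by (simp add: antid_def)

lemma Qm_dim[simp]: "dim_row (Qm m n) = 2*m+2*n" "dim_col (Qm m n) = 2*m+2*n"
  using carrier_matD[OF Qm_carrier[of m n]] by simp_all

lemma QT: "transpose_mat (Qm m n) = - Qm m n"
proof (rule eq_matI, goal_cases)
  case (1 i j)
  hence i: "i < 2*m+2*n" and j: "j < 2*m+2*n" by auto
  show ?case
  proof (cases "i < 2*m"; cases "j < 2*m")
    assume a: "i < 2*m" "j < 2*m"
    show ?thesis
    proof (cases "i+j+1 = 2*m")
      case True
      hence "j = 2*m - Suc i" by auto
      thus ?thesis using i j a True by (simp add: Qm_entry)
    qed (use i j a in \<open>auto simp: Qm_entry\<close>)
  next
    assume a: "\<not> i < 2*m" "\<not> j < 2*m"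
    show ?thesis
    proof (cases "(i-2*m)+(j-2*m)+1 = 2*n")
      case True
      hence "j - 2*m = 2*n - Suc (i - 2*m)" by auto
      moreover have "i - 2*m < 2*n" using i a by auto
      ultimately show ?thesis using i j a True by (auto simp add: Qm_entry sg_def)
    qed (use i j a in \<open>auto simp: Qm_entry\<close>)
  qed (use i j in \<open>auto simp: Qm_entry\<close>)
qed auto

lemma minv_props: assumes G: "G \<in> carrier_mat N N" and d: "det G \<noteq> 0"
  shows "G * minv G = 1\<^sub>m N" "minv G * G = 1\<^sub>m N" "minv G \<in> carrier_mat N N"
proof -
  have "mat_inverse G \<noteq> None"
  proof
    assume "mat_inverse G = None"
    from mat_inverse(1)[OF G this, of "()"] det_non_zero_imp_unit[OF G d, of "()"] show False by auto
  qed
  then obtain B where B: "mat_inverse G = Some B" by auto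
  from mat_inverse(2)[OF G B] B show "G * minv G = 1\<^sub>m N" "minv G * G = 1\<^sub>m N" "minv G \<in> carrier_mat N N"
    unfolding minv_def by auto
qed

lemma skew_zero: assumes G: "G \<in> carrier_mat N N" and B: "B \<in> carrier_mat N N" and GB: "G * B = 1\<^sub>m N"
  and Q: "Q \<in> carrier_mat N N" and sym: "transpose_mat G * Q = Q * G" and skew: "transpose_mat Q = - Q"
  and x: "x \<in> carrier_vec N"
  shows "x \<bullet> (Q *\<^sub>v (B *\<^sub>v x)) = (0::complex)"
proof -
  define z where "z = B *\<^sub>v x"
  have z: "z \<in> carrier_vec N" using B x unfolding z_def by auto
  have Gz: "G *\<^sub>v z = x" unfolding z_def using G B x GB
    by (metis assoc_mult_mat_vec one_mult_mat_vec)
  have "x \<bullet> (Q *\<^sub>v z) = (G *\<^sub>v z) \<bullet> (Q *\<^sub>v z)" using Gz by simp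
  also have "\<dots> = (transpose_mat (transpose_mat G) *\<^sub>v z) \<bullet> (Q *\<^sub>v z)" by simp
  also have "\<dots> = z \<bullet> (transpose_mat G *\<^sub>v (Q *\<^sub>v z))"
    by (rule transpose_vec_mult_scalar[of _ N N]) (use G Q z in auto)
  also have "\<dots> = z \<bullet> ((transpose_mat G * Q) *\<^sub>v z)" using G Q z by simp
  also have "\<dots> = z \<bullet> ((Q * G) *\<^sub>v z)" using sym by simp
  also have "\<dots> = z \<bullet> (Q *\<^sub>v x)" using G Q z Gz by simp
  also have "\<dots> = (transpose_mat Q *\<^sub>v z) \<bullet> x"
    by (rule transpose_vec_mult_scalar[symmetric, of _ N N]) (use Q z x in auto)
  also have "\<dots> = - ((Q *\<^sub>v z) \<bullet> x)" using skew Q z x by simp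
  also have "\<dots> = - (x \<bullet> (Q *\<^sub>v z))" using comm_scalar_prod[of "Q *\<^sub>v z" N x] Q z x by simp
  finally show ?thesis unfolding z_def by simp
qed


lemma Dm_dim[simp]: "dim_row (Dm m n) = 2*m+2*n" "dim_col (Dm m n) = 2*m+2*n"
  using carrier_matD[OF Dm_carrier[of m n]] by simp_all

lemma P1_carrier[simp]: "P1_mat m n \<in> carrier_mat (2*m+2*n) (2*m+2*n)" unfolding P1_mat_def by simp
lemma P2_carrier[simp]: "P2_mat m n \<in> carrier_mat (2*m+2*n) (2*m+2*n)" unfolding P2_mat_def by (rule minus_carrier_mat) simp
lemma P_dim[simp]: "dim_row (P1_mat m n) = 2*m+2*n" "dim_col (P1_mat m n) = 2*m+2*n"
   "dim_row (P2_mat m n) = 2*m+2*n" "dim_col (P2_mat m n) = 2*m+2*n"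
  using carrier_matD[OF P1_carrier[of m n]] carrier_matD[OF P2_carrier[of m n]] by simp_all
lemma e_dim[simp]: "dim_vec (e_vec m n) = 2*m+2*n" unfolding e_vec_def by simp
lemma e_carrier[simp]: "e_vec m n \<in> carrier_vec (2*m+2*n)" unfolding e_vec_def by simp

lemma G_sym: assumes g: "g12 \<in> carrier_mat (2*m) (2*n)"
  shows "transpose_mat (G_mat m n g12 l1 l2) * Qm m n = Qm m n * G_mat m n g12 l1 l2"
proof -
  let ?N = "2*m+2*n"
  have a: "Dm m n * P1_mat m n \<in> carrier_mat ?N ?N" "Dm m n * P2_mat m n \<in> carrier_mat ?N ?N"
    by (rule mult_carrier_mat[of _ _ ?N], simp_all)+
  have z: "(0::complex) \<cdot>\<^sub>m (Dm m n * P1_mat m n) - 0 \<cdot>\<^sub>m (Dm m n * P2_mat m n) = 0\<^sub>m ?N ?N"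
    using a by (intro eq_matI) auto
  have c: "Qm m n * G_mat m n g12 l1 l2 \<in> carrier_mat ?N ?N" using g by (intro mult_carrier_mat[of _ _ ?N]) auto
  show ?thesis using F1[OF g, of l1 l2 l1 l2] z c by simp
qed

lemma smult_mat_vec': "dim_vec v = dim_col A \<Longrightarrow> (k \<cdot>\<^sub>m A) *\<^sub>v v = (k::complex) \<cdot>\<^sub>v (A *\<^sub>v v)"
  by (intro eq_vecI) (auto simp: scalar_prod_def sum_distrib_left mult.assoc intro!: sum.cong)

lemma key: assumes g: "g12 \<in> carrier_mat (2*m) (2*n)"
  and dl: "det (G_mat m n g12 l1 l2) \<noteq> 0" and dk: "det (G_mat m n g12 k1 k2) \<noteq> 0"
  defines "v \<equiv> minv (G_mat m n g12 l1 l2) *\<^sub>v e_vec m n"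
  and "w \<equiv> minv (G_mat m n g12 k1 k2) *\<^sub>v e_vec m n"
  shows "(l2-k2) * (w \<bullet> (Dm m n *\<^sub>v (P1_mat m n *\<^sub>v v))) = (l1-k1) * (w \<bullet> (Dm m n *\<^sub>v (P2_mat m n *\<^sub>v v)))"
proof -
  let ?N = "2*m+2*n"
  let ?Gl = "G_mat m n g12 l1 l2" and ?Gk = "G_mat m n g12 k1 k2" and ?Q = "Qm m n" and ?e = "e_vec m n"
  let ?R = "(l2-k2) \<cdot>\<^sub>m (Dm m n * P1_mat m n) - (l1-k1) \<cdot>\<^sub>m (Dm m n * P2_mat m n)"
  have Gl: "?Gl \<in> carrier_mat ?N ?N" and Gk: "?Gk \<in> carrier_mat ?N ?N" using g by auto
  note il = minv_props[OF Gl dl] and ik = minv_props[OF Gk dk]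
  have v: "v \<in> carrier_vec ?N" and w: "w \<in> carrier_vec ?N" unfolding v_def w_def using il ik by auto
  have Glv: "?Gl *\<^sub>v v = ?e" unfolding v_def using il Gl
    by (metis assoc_mult_mat_vec one_mult_mat_vec e_carrier)
  have Gkw: "?Gk *\<^sub>v w = ?e" unfolding w_def using ik Gk
    by (metis assoc_mult_mat_vec one_mult_mat_vec e_carrier)
  have zl: "?e \<bullet> (?Q *\<^sub>v v) = 0" unfolding v_def
    by (rule skew_zero[OF Gl il(3) il(1) Qm_carrier G_sym[OF g] QT e_carrier])
  have zk: "?e \<bullet> (?Q *\<^sub>v w) = 0" unfolding w_def
    by (rule skew_zero[OF Gk ik(3) ik(1) Qm_carrier G_sym[OF g] QT e_carrier])
  have P1c: "Dm m n * P1_mat m n \<in> carrier_mat ?N ?N" and P2c: "Dm m n * P2_mat m n \<in> carrier_mat ?N ?N"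
    by (rule mult_carrier_mat[of _ _ ?N], simp_all)+
  have Rc: "?R \<in> carrier_mat ?N ?N" using P1c P2c by (intro minus_carrier_mat smult_carrier_mat)
  have QGc: "?Q * ?Gl \<in> carrier_mat ?N ?N" using Gl by (intro mult_carrier_mat[of _ _ ?N]) auto
  have "w \<bullet> ((transpose_mat ?Gk * ?Q) *\<^sub>v v) = w \<bullet> (transpose_mat ?Gk *\<^sub>v (?Q *\<^sub>v v))"
    using Gk v by (subst assoc_mult_mat_vec[of _ ?N ?N _ ?N]) auto
  also have "\<dots> = (transpose_mat (transpose_mat ?Gk) *\<^sub>v w) \<bullet> (?Q *\<^sub>v v)"
    by (rule transpose_vec_mult_scalar[symmetric, of _ ?N ?N]) (use Gk v w mult_mat_vec_carrier[OF Qm_carrier v] in auto)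
  also have "\<dots> = 0" using Gkw zl by simp
  finally have L: "w \<bullet> ((transpose_mat ?Gk * ?Q) *\<^sub>v v) = 0" .
  have "w \<bullet> ((?Q * ?Gl + ?R) *\<^sub>v v) = w \<bullet> (?Q *\<^sub>v (?Gl *\<^sub>v v)) + w \<bullet> (?R *\<^sub>v v)"
    using QGc Rc Gl v w by (simp add: add_mult_distrib_mat_vec[OF QGc Rc v] scalar_prod_add_distrib[OF w mult_mat_vec_carrier[OF Qm_carrier mult_mat_vec_carrier[OF Gl v]] mult_mat_vec_carrier[OF Rc v]] assoc_mult_mat_vec[OF Qm_carrier Gl v])
  also have "w \<bullet> (?Q *\<^sub>v (?Gl *\<^sub>v v)) = w \<bullet> (?Q *\<^sub>v ?e)" using Glv by simp
  also have "\<dots> = (transpose_mat ?Q *\<^sub>v w) \<bullet> ?e"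
    by (rule transpose_vec_mult_scalar[symmetric, of _ ?N ?N]) (use w in auto)
  also have "\<dots> = - ((?Q *\<^sub>v w) \<bullet> ?e)" unfolding QT using w by simp
  also have "\<dots> = - (?e \<bullet> (?Q *\<^sub>v w))" using comm_scalar_prod[OF mult_mat_vec_carrier[OF Qm_carrier w] e_carrier] by simp
  also have "\<dots> = 0" using zk by simp
  finally have Rz: "w \<bullet> (?R *\<^sub>v v) = 0" using L F1[OF g, of k1 k2 l1 l2] by simp
  have "?R *\<^sub>v v = (l2-k2) \<cdot>\<^sub>v (Dm m n *\<^sub>v (P1_mat m n *\<^sub>v v)) - (l1-k1) \<cdot>\<^sub>v (Dm m n *\<^sub>v (P2_mat m n *\<^sub>v v))"
    using P1c P2c v by (simp add: minus_mult_distrib_mat_vec[of _ ?N ?N] smult_mat_vec' assoc_mult_mat_vec[of _ ?N ?N _ ?N])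
  moreover have "w \<bullet> (?R *\<^sub>v v) = (l2-k2) * (w \<bullet> (Dm m n *\<^sub>v (P1_mat m n *\<^sub>v v))) - (l1-k1) * (w \<bullet> (Dm m n *\<^sub>v (P2_mat m n *\<^sub>v v)))"
  proof -
    have a1: "Dm m n *\<^sub>v (P1_mat m n *\<^sub>v v) \<in> carrier_vec ?N" by (rule mult_mat_vec_carrier[OF Dm_carrier mult_mat_vec_carrier[OF P1_carrier v]])
    have a2: "Dm m n *\<^sub>v (P2_mat m n *\<^sub>v v) \<in> carrier_vec ?N" by (rule mult_mat_vec_carrier[OF Dm_carrier mult_mat_vec_carrier[OF P2_carrier v]])
    show ?thesis unfolding \<open>?R *\<^sub>v v = _\<close>
      by (subst scalar_prod_minus_distrib[OF w smult_carrier_vec[THEN iffD2, OF a1] smult_carrier_vec[THEN iffD2, OF a2]])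
        (simp only: scalar_prod_smult_distrib[OF w a1] scalar_prod_smult_distrib[OF w a2])
  qed
  ultimately show ?thesis using Rz by simp
qed


lemma final_form: assumes P: "P \<in> carrier_mat (2*m+2*n) (2*m+2*n)"
  and v: "v \<in> carrier_vec (2*m+2*n)" and w: "w \<in> carrier_vec (2*m+2*n)"
  shows "(s \<cdot>\<^sub>v (transpose_mat (Dm m n) *\<^sub>v (ck \<cdot>\<^sub>v w))) \<bullet> (P *\<^sub>v (cl \<cdot>\<^sub>v v))
     = s * ck * cl * (w \<bullet> (Dm m n *\<^sub>v (P *\<^sub>v v)))"
proof -
  let ?N = "2*m+2*n"
  have DT: "transpose_mat (Dm m n) \<in> carrier_mat ?N ?N" by simp
  have a: "transpose_mat (Dm m n) *\<^sub>v w \<in> carrier_vec ?N" by (rule mult_mat_vec_carrier[OF DT w])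
  have b: "P *\<^sub>v v \<in> carrier_vec ?N" by (rule mult_mat_vec_carrier[OF P v])
  have "transpose_mat (Dm m n) *\<^sub>v (ck \<cdot>\<^sub>v w) = ck \<cdot>\<^sub>v (transpose_mat (Dm m n) *\<^sub>v w)"
    by (rule mult_mat_vec[OF DT w])
  moreover have "P *\<^sub>v (cl \<cdot>\<^sub>v v) = cl \<cdot>\<^sub>v (P *\<^sub>v v)" by (rule mult_mat_vec[OF P v])
  moreover have "(transpose_mat (Dm m n) *\<^sub>v w) \<bullet> (P *\<^sub>v v) = w \<bullet> (Dm m n *\<^sub>v (P *\<^sub>v v))"
    by (rule transpose_vec_mult_scalar[OF Dm_carrier b w])
  ultimately show ?thesis using a b
    by (simp add: smult_scalar_prod_distrib[of _ ?N] scalar_prod_smult_distrib[of _ ?N])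
qed

lemma alg: assumes "(x::complex) \<noteq> 0" "y \<noteq> 0" "y * a = x * b"
  shows "c * inverse x * (S * a) = c * inverse y * (S * b)"
proof -
  have "a = x*b/y" using assms by (simp add: field_simps)
  thus ?thesis using assms by (simp add: field_simps)
qed

theorem lemma3p1:
  fixes m n :: nat and g12 :: "complex mat" and p :: "complex poly poly"
    and l1 l2 k1 k2 :: complex
  assumes "m \<ge> 1" and "n \<ge> 1"
    and "g12 \<in> carrier_mat (2*m) (2*n)"
    and theta_sq: "\<forall>x1 x2. (poly2 p x1 x2)\<^sup>2 = det (G_mat m n g12 x1 x2)"
    and theta_lead: "coeff (coeff p n) m = -1"
    and "det (G_mat m n g12 l1 l2) \<noteq> 0" and "det (G_mat m n g12 k1 k2) \<noteq> 0"
    and "l1 \<noteq> \<i>/2" and "l2 \<noteq> \<i>/2"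
    and "k1 \<noteq> \<i>/2" and "k2 \<noteq> \<i>/2" and "k1 \<noteq> -\<i>/2" and "k2 \<noteq> -\<i>/2"
    and "l1 \<noteq> k1" and "l2 \<noteq> k2"
  shows "\<i> * inverse (l1 - k1) * (u_row m n g12 p k1 k2 \<bullet> (P1_mat m n *\<^sub>v uhat m n g12 p l1 l2))
       = \<i> * inverse (l2 - k2) * (u_row m n g12 p k1 k2 \<bullet> (P2_mat m n *\<^sub>v uhat m n g12 p l1 l2))"
proof -
  note g = assms(3)
  let ?N = "2*m+2*n"
  define v where "v = minv (G_mat m n g12 l1 l2) *\<^sub>v e_vec m n"
  define w where "w = minv (G_mat m n g12 k1 k2) *\<^sub>v e_vec m n"
  have Gl: "G_mat m n g12 l1 l2 \<in> carrier_mat ?N ?N" and Gk: "G_mat m n g12 k1 k2 \<in> carrier_mat ?N ?N" using g by auto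
  have v: "v \<in> carrier_vec ?N" unfolding v_def using minv_props(3)[OF Gl assms(6)] by simp
  have w: "w \<in> carrier_vec ?N" unfolding w_def using minv_props(3)[OF Gk assms(7)] by simp
  have K: "(l2-k2) * (w \<bullet> (Dm m n *\<^sub>v (P1_mat m n *\<^sub>v v))) = (l1-k1) * (w \<bullet> (Dm m n *\<^sub>v (P2_mat m n *\<^sub>v v)))"
    unfolding v_def w_def by (rule key[OF g assms(6) assms(7)])
  define s where "s = ((k1 - \<i>/2) / (k1 + \<i>/2)) ^ n * ((k2 - \<i>/2) / (k2 + \<i>/2)) ^ m"
  define ck where "ck = - \<i> * inverse ((k1 - \<i>/2) ^ n) * inverse ((k2 - \<i>/2) ^ m) * poly2 p k1 k2"
  define cl where "cl = - \<i> * inverse ((l1 - \<i>/2) ^ n) * inverse ((l2 - \<i>/2) ^ m) * poly2 p l1 l2"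
  have U: "u_row m n g12 p k1 k2 = s \<cdot>\<^sub>v (transpose_mat (Dm m n) *\<^sub>v (ck \<cdot>\<^sub>v w))"
    unfolding u_row_def uhat_def Dm_def s_def ck_def w_def ..
  have H: "uhat m n g12 p l1 l2 = cl \<cdot>\<^sub>v v" unfolding uhat_def cl_def v_def ..
  have X1: "u_row m n g12 p k1 k2 \<bullet> (P1_mat m n *\<^sub>v uhat m n g12 p l1 l2) = s*ck*cl*(w \<bullet> (Dm m n *\<^sub>v (P1_mat m n *\<^sub>v v)))"
    unfolding U H by (rule final_form[OF P1_carrier v w])
  have X2: "u_row m n g12 p k1 k2 \<bullet> (P2_mat m n *\<^sub>v uhat m n g12 p l1 l2) = s*ck*cl*(w \<bullet> (Dm m n *\<^sub>v (P2_mat m n *\<^sub>v v)))"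
    unfolding U H by (rule final_form[OF P2_carrier v w])
  have d1: "l1 - k1 \<noteq> 0" and d2: "l2 - k2 \<noteq> 0" using assms by auto
  show ?thesis unfolding X1 X2 by (rule alg[OF d1 d2 K])
qed

end
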